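(* Let $G$ be a locally compact group, $X$ a proper $G$-space, $H$ a compact subgroup of $G$, and $S\subset X$ a global $H$-slice of $X$ which is a small subset of $X$. Then: (1) the restriction $f:G\times S\to X$, $f(g,s)=gs$, of the action is an open map; (2) the restriction $p:S\to X/G$ of the orbit map $X\to X/G$ is an open map.
   Context: All spaces are completely regular Hausdorff. A $G$-space is a space $X$ with a continuous action $G\times X\to X$, $(g,x)\mapsto gx$, with $ex=x$ and $(gh)x=g(hx)$. For $S\subset X$ and a subgroup $H\subset G$, $H(S)=\{hs\mid h\in H, s\in S\}$; $X/G$ is the orbit space with the quotient topology. For a closed subgroup $H\subset G$, a subset $S\subset X$ is an $H$-slice in $X$ if: (i) $H(S)=S$; (ii) $S$ is closed in $G(S)$; (iii) if $g\in G\setminus H$ then $gS\cap S=\emptyset$; (iv) $G(S)$ is open in $X$. It is a global $H$-slice if moreover $G(S)=X$. For $U,V\subset X$ the transporter is $\langle U,V\rangle=\{g\in G\mid gU\cap V\neq\emptyset\}$; $U$ and $V$ are thin relative to each other if $\langle U,V\rangle$ has compact closure in $G$. A subset $U\subset X$ is small if every point of $X$ has a neighborhood thin relative to $U$. For $G$ locally compact, a $G$-space $X$ is proper if every point of $X$ has a small neighborhood. *)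

theory Defs
  imports "HOL-Analysis.Analysis" "HOL-Algebra.Group"
begin

definition topological_group :: "('g, 'm) monoid_scheme \<Rightarrow> 'g topology \<Rightarrow> bool" where
  "topological_group G T \<longleftrightarrow> group G \<and> topspace T = carrier G \<and>
     continuous_map (prod_topology T T) T (\<lambda>(g, h). g \<otimes>\<^bsub>G\<^esub> h) \<and>
     continuous_map T T (\<lambda>g. inv\<^bsub>G\<^esub> g)"

definition G_space :: "('g, 'm) monoid_scheme \<Rightarrow> 'g topology \<Rightarrow> 'x topology \<Rightarrow> ('g \<Rightarrow> 'x \<Rightarrow> 'x) \<Rightarrow> bool" where
  "G_space G T X act \<longleftrightarrow>
     continuous_map (prod_topology T X) X (\<lambda>(g, x). act g x) \<and>
     (\<forall>x\<in>topspace X. act \<one>\<^bsub>G\<^esub> x = x) \<and>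
     (\<forall>g\<in>carrier G. \<forall>h\<in>carrier G. \<forall>x\<in>topspace X. act (g \<otimes>\<^bsub>G\<^esub> h) x = act g (act h x))"

definition set_act :: "('g \<Rightarrow> 'x \<Rightarrow> 'x) \<Rightarrow> 'g set \<Rightarrow> 'x set \<Rightarrow> 'x set" where
  "set_act act A S = {act h s | h s. h \<in> A \<and> s \<in> S}"

definition transporter :: "('g, 'm) monoid_scheme \<Rightarrow> ('g \<Rightarrow> 'x \<Rightarrow> 'x) \<Rightarrow> 'x set \<Rightarrow> 'x set \<Rightarrow> 'g set" where
  "transporter G act U V = {g \<in> carrier G. act g ` U \<inter> V \<noteq> {}}"

definition thin :: "('g, 'm) monoid_scheme \<Rightarrow> 'g topology \<Rightarrow> ('g \<Rightarrow> 'x \<Rightarrow> 'x) \<Rightarrow> 'x set \<Rightarrow> 'x set \<Rightarrow> bool" where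
  "thin G T act U V \<longleftrightarrow> compactin T (T closure_of (transporter G act U V))"

definition small :: "('g, 'm) monoid_scheme \<Rightarrow> 'g topology \<Rightarrow> 'x topology \<Rightarrow> ('g \<Rightarrow> 'x \<Rightarrow> 'x) \<Rightarrow> 'x set \<Rightarrow> bool" where
  "small G T X act U \<longleftrightarrow>
     (\<forall>x\<in>topspace X. \<exists>N. N \<subseteq> topspace X \<and> x \<in> X interior_of N \<and> thin G T act N U)"

text \<open>Proper G-space (G locally compact is assumed separately): every point has a small neighbourhood.\<close>
definition proper_G_space :: "('g, 'm) monoid_scheme \<Rightarrow> 'g topology \<Rightarrow> 'x topology \<Rightarrow> ('g \<Rightarrow> 'x \<Rightarrow> 'x) \<Rightarrow> bool" where
  "proper_G_space G T X act \<longleftrightarrow>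
     (\<forall>x\<in>topspace X. \<exists>N. N \<subseteq> topspace X \<and> x \<in> X interior_of N \<and> small G T X act N)"

definition slice :: "('g, 'm) monoid_scheme \<Rightarrow> 'g topology \<Rightarrow> 'x topology \<Rightarrow> ('g \<Rightarrow> 'x \<Rightarrow> 'x) \<Rightarrow> 'g set \<Rightarrow> 'x set \<Rightarrow> bool" where
  "slice G T X act H S \<longleftrightarrow>
     subgroup H G \<and> closedin T H \<and> S \<subseteq> topspace X \<and>
     set_act act H S = S \<and>
     closedin (subtopology X (set_act act (carrier G) S)) S \<and>
     (\<forall>g \<in> carrier G - H. act g ` S \<inter> S = {}) \<and>
     openin X (set_act act (carrier G) S)"

definition global_slice :: "('g, 'm) monoid_scheme \<Rightarrow> 'g topology \<Rightarrow> 'x topology \<Rightarrow> ('g \<Rightarrow> 'x \<Rightarrow> 'x) \<Rightarrow> 'g set \<Rightarrow> 'x set \<Rightarrow> bool" where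
  "global_slice G T X act H S \<longleftrightarrow> slice G T X act H S \<and> set_act act (carrier G) S = topspace X"

definition orbit :: "('g, 'm) monoid_scheme \<Rightarrow> ('g \<Rightarrow> 'x \<Rightarrow> 'x) \<Rightarrow> 'x \<Rightarrow> 'x set" where
  "orbit G act x = set_act act (carrier G) {x}"

definition orbit_space :: "('g, 'm) monoid_scheme \<Rightarrow> 'x topology \<Rightarrow> ('g \<Rightarrow> 'x \<Rightarrow> 'x) \<Rightarrow> 'x set topology" where
  "orbit_space G X act = topology (\<lambda>U. U \<subseteq> orbit G act ` topspace X \<and>
      openin X {x \<in> topspace X. orbit G act x \<in> U})"

end

theory Submission
  imports Defs
begin

lemma tg_facts:
  assumes "topological_group G T"
  shows "group G" "topspace T = carrier G"
    "continuous_map (prod_topology T T) T (\<lambda>(g, h). g \<otimes>\<^bsub>G\<^esub> h)"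
    "continuous_map T T (\<lambda>g. inv\<^bsub>G\<^esub> g)"
  using assms unfolding topological_group_def by auto

lemma mult_cont:
  assumes "topological_group G T" "continuous_map Z T f" "continuous_map Z T g"
  shows "continuous_map Z T (\<lambda>z. f z \<otimes>\<^bsub>G\<^esub> g z)"
proof -
  have "continuous_map Z T ((\<lambda>(g, h). g \<otimes>\<^bsub>G\<^esub> h) \<circ> (\<lambda>z. (f z, g z)))"
    by (rule continuous_map_compose[OF continuous_map_pairedI[OF assms(2,3)] tg_facts(3)[OF assms(1)]])
  then show ?thesis by (simp add: o_def)
qed

lemma inv_cont:
  assumes "topological_group G T" "continuous_map Z T f"
  shows "continuous_map Z T (\<lambda>z. inv\<^bsub>G\<^esub> (f z))"
proof -
  have "continuous_map Z T ((\<lambda>g. inv\<^bsub>G\<^esub> g) \<circ> f)"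
    by (rule continuous_map_compose[OF assms(2) tg_facts(4)[OF assms(1)]])
  then show ?thesis by (simp add: o_def)
qed

lemma act_cont:
  assumes "G_space G T X act" "continuous_map Z T f" "continuous_map Z X g"
  shows "continuous_map Z X (\<lambda>z. act (f z) (g z))"
proof -
  have c: "continuous_map (prod_topology T X) X (\<lambda>(g, x). act g x)"
    using assms(1) unfolding G_space_def by auto
  have "continuous_map Z X ((\<lambda>(g, x). act g x) \<circ> (\<lambda>z. (f z, g z)))"
    by (rule continuous_map_compose[OF continuous_map_pairedI[OF assms(2,3)] c])
  then show ?thesis by (simp add: o_def)
qed

lemma act_in:
  assumes "topological_group G T" "G_space G T X act" "g \<in> carrier G" "x \<in> topspace X"
  shows "act g x \<in> topspace X"
proof -
  have c: "continuous_map (prod_topology T X) X (\<lambda>(g, x). act g x)"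
    using assms(2) unfolding G_space_def by auto
  have "(g, x) \<in> topspace (prod_topology T X)"
    using assms tg_facts(2)[OF assms(1)] by simp
  from continuous_map_image_subset_topspace[OF c] this show ?thesis by force
qed

lemma act_mult:
  assumes "G_space G T X act" "g \<in> carrier G" "h \<in> carrier G" "x \<in> topspace X"
  shows "act (g \<otimes>\<^bsub>G\<^esub> h) x = act g (act h x)"
  using assms unfolding G_space_def by auto

lemma act_one:
  assumes "G_space G T X act" "x \<in> topspace X"
  shows "act \<one>\<^bsub>G\<^esub> x = x"
  using assms unfolding G_space_def by auto

lemma orbit_eq: "orbit G act x = (\<lambda>g. act g x) ` carrier G"
  by (auto simp: orbit_def set_act_def)

lemma part1:
  assumes TG: "topological_group G T" and GS: "G_space G T X act"
    and gsl: "global_slice G T X act H S" and sm: "small G T X act S"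
    and U: "openin (prod_topology T (subtopology X S)) U"
  shows "openin X ((\<lambda>(g, s). act g s) ` U)"
proof -
  interpret group G using tg_facts(1)[OF TG] .
  have topT: "topspace T = carrier G" using tg_facts(2)[OF TG] .
  have cact: "continuous_map (prod_topology T X) X (\<lambda>(g, x). act g x)"
    using GS unfolding G_space_def by auto
  have sub: "subgroup H G" and SX: "S \<subseteq> topspace X" and HS: "set_act act H S = S"
    and disj: "\<And>g. g \<in> carrier G - H \<Longrightarrow> act g ` S \<inter> S = {}"
    and GSX: "set_act act (carrier G) S = topspace X"
    and Scl0: "closedin (subtopology X (set_act act (carrier G) S)) S"
    using gsl unfolding global_slice_def slice_def by auto
  have Scl: "closedin X S" using Scl0 GSX by simp
  have HG: "H \<subseteq> carrier G" using subgroup.subset[OF sub] .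
  have HSin: "\<And>h s. h \<in> H \<Longrightarrow> s \<in> S \<Longrightarrow> act h s \<in> S"
    using HS unfolding set_act_def by blast
  let ?f = "\<lambda>(g, s). act g s"
  show ?thesis
  proof (subst openin_subopen, intro ballI)
    fix x assume "x \<in> ?f ` U"
    then obtain g0 s0 where g0s0: "(g0, s0) \<in> U" and xeq: "x = act g0 s0" by auto
    have "(g0, s0) \<in> topspace (prod_topology T (subtopology X S))"
      using openin_subset[OF U] g0s0 by auto
    then have g0G: "g0 \<in> carrier G" and s0S: "s0 \<in> S" and s0X: "s0 \<in> topspace X"
      using topT by auto
    obtain A B where A: "openin T A" and B: "openin (subtopology X S) B" and g0A: "g0 \<in> A"
      and s0B: "s0 \<in> B" and ABU: "A \<times> B \<subseteq> U"
      using U g0s0 unfolding openin_prod_topology_alt by meson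
    obtain B' where B': "openin X B'" and Beq: "B = B' \<inter> S"
      using B unfolding openin_subtopology by blast
    have xX: "x \<in> topspace X" using act_in[OF TG GS g0G s0X] xeq by simp
    obtain N where NX: "N \<subseteq> topspace X" and xN: "x \<in> X interior_of N"
      and thinN: "thin G T act N S"
      using sm xX unfolding small_def by blast
    define K where "K = T closure_of (transporter G act N S)"
    have Kc: "compactin T K" using thinN unfolding thin_def K_def .
    define FU where "FU = ?f ` U"
    have claim: "\<exists>V Q. openin T V \<and> k \<in> V \<and> openin X Q \<and> x \<in> Q \<and>
                   (\<forall>a\<in>V. \<forall>y\<in>Q. act a y \<in> S \<longrightarrow> y \<in> FU)" if kK: "k \<in> K" for k
    proof -
      have kG: "k \<in> carrier G" using kK closure_of_subset_topspace[of T "transporter G act N S"] topT unfolding K_def by auto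
      show ?thesis
      proof (cases "act k x \<in> S")
        case False
        define W where "W = {p \<in> topspace (prod_topology T X). ?f p \<in> topspace X - S}"
        have "openin (prod_topology T X) W"
          unfolding W_def by (rule openin_continuous_map_preimage[OF cact]) (use Scl in auto)
        moreover have "(k, x) \<in> W" unfolding W_def using False kG xX topT act_in[OF TG GS kG xX] by auto
        ultimately obtain V Q where "openin T V" "openin X Q" "k \<in> V" "x \<in> Q" "V \<times> Q \<subseteq> W"
          unfolding openin_prod_topology_alt by meson
        then show ?thesis unfolding W_def by (intro exI[of _ V] exI[of _ Q]) auto
      next
        case True
        define h where "h = k \<otimes>\<^bsub>G\<^esub> g0"
        have hG: "h \<in> carrier G" using kG g0G h_def by simp
        have kx: "act k x = act h s0" using act_mult[OF GS kG g0G s0X] xeq h_def by simp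
        have hH: "h \<in> H"
        proof (rule ccontr)
          assume "h \<notin> H"
          then have "act h ` S \<inter> S = {}" using disj hG by blast
          then show False using True kx s0S by blast
        qed
        have ihG: "inv\<^bsub>G\<^esub> h \<in> carrier G" using hG by simp
        define \<phi> where "\<phi> = (\<lambda>p. (inv\<^bsub>G\<^esub> (fst p) \<otimes>\<^bsub>G\<^esub> k \<otimes>\<^bsub>G\<^esub> g0, act (inv\<^bsub>G\<^esub> h) (act (fst p) (snd p))))"
        have c1: "continuous_map (prod_topology T X) T (\<lambda>p. inv\<^bsub>G\<^esub> (fst p) \<otimes>\<^bsub>G\<^esub> k \<otimes>\<^bsub>G\<^esub> g0)"
          by (intro mult_cont[OF TG] inv_cont[OF TG] continuous_map_fst)
             (auto simp: continuous_map_const topT kG g0G)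
        have c2: "continuous_map (prod_topology T X) X (\<lambda>p. act (inv\<^bsub>G\<^esub> h) (act (fst p) (snd p)))"
          by (intro act_cont[OF GS] continuous_map_fst continuous_map_snd)
             (auto simp: continuous_map_const topT ihG)
        have cphi: "continuous_map (prod_topology T X) (prod_topology T X) \<phi>"
          unfolding \<phi>_def by (rule continuous_map_pairedI[OF c1 c2])
        define W where "W = {p \<in> topspace (prod_topology T X). \<phi> p \<in> A \<times> B'}"
        have "openin (prod_topology T X) W"
          unfolding W_def by (rule openin_continuous_map_preimage[OF cphi])
            (simp add: openin_prod_Times_iff A B')
        moreover have "\<phi> (k, x) = (g0, s0)"
        proof -
          have "inv\<^bsub>G\<^esub> k \<otimes>\<^bsub>G\<^esub> k \<otimes>\<^bsub>G\<^esub> g0 = g0" using kG g0G by simp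
          moreover have "act (inv\<^bsub>G\<^esub> h) (act k x) = s0"
            using kx act_mult[OF GS ihG hG s0X, symmetric] act_one[OF GS s0X] hG by simp
          ultimately show ?thesis unfolding \<phi>_def by simp
        qed
        then have "(k, x) \<in> W" unfolding W_def using kG xX topT g0A s0B Beq by auto
        ultimately obtain V Q where VO: "openin T V" "openin X Q" "k \<in> V" "x \<in> Q" "V \<times> Q \<subseteq> W"
          unfolding openin_prod_topology_alt by meson
        have "\<forall>a\<in>V. \<forall>y\<in>Q. act a y \<in> S \<longrightarrow> y \<in> FU"
        proof (intro ballI impI)
          fix a y assume aV: "a \<in> V" and yO: "y \<in> Q" and ayS: "act a y \<in> S"
          have aG: "a \<in> carrier G" using openin_subset[OF VO(1)] aV topT by auto
          have yX: "y \<in> topspace X" using openin_subset[OF VO(2)] yO by auto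
          have "(a, y) \<in> W" using VO(5) aV yO by auto
          then have in1: "inv\<^bsub>G\<^esub> a \<otimes>\<^bsub>G\<^esub> k \<otimes>\<^bsub>G\<^esub> g0 \<in> A" and in2: "act (inv\<^bsub>G\<^esub> h) (act a y) \<in> B'"
            unfolding W_def \<phi>_def by auto
          have in3: "act (inv\<^bsub>G\<^esub> h) (act a y) \<in> S"
            using HSin[OF _ ayS] hH sub by (simp add: subgroup.m_inv_closed)
          have pU: "(inv\<^bsub>G\<^esub> a \<otimes>\<^bsub>G\<^esub> k \<otimes>\<^bsub>G\<^esub> g0, act (inv\<^bsub>G\<^esub> h) (act a y)) \<in> U"
            using ABU in1 in2 in3 Beq by auto
          have ayX: "act a y \<in> topspace X" using act_in[OF TG GS aG yX] .
          have "act (inv\<^bsub>G\<^esub> a \<otimes>\<^bsub>G\<^esub> k \<otimes>\<^bsub>G\<^esub> g0) (act (inv\<^bsub>G\<^esub> h) (act a y))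
              = act (inv\<^bsub>G\<^esub> a \<otimes>\<^bsub>G\<^esub> k \<otimes>\<^bsub>G\<^esub> g0 \<otimes>\<^bsub>G\<^esub> inv\<^bsub>G\<^esub> h \<otimes>\<^bsub>G\<^esub> a) y"
          proof -
            have cG: "inv\<^bsub>G\<^esub> a \<otimes>\<^bsub>G\<^esub> k \<otimes>\<^bsub>G\<^esub> g0 \<in> carrier G" using aG kG g0G by simp
            have "act (inv\<^bsub>G\<^esub> a \<otimes>\<^bsub>G\<^esub> k \<otimes>\<^bsub>G\<^esub> g0) (act (inv\<^bsub>G\<^esub> h) (act a y))
              = act (inv\<^bsub>G\<^esub> a \<otimes>\<^bsub>G\<^esub> k \<otimes>\<^bsub>G\<^esub> g0 \<otimes>\<^bsub>G\<^esub> inv\<^bsub>G\<^esub> h) (act a y)"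
              using act_mult[OF GS cG ihG ayX] by simp
            also have "\<dots> = act (inv\<^bsub>G\<^esub> a \<otimes>\<^bsub>G\<^esub> k \<otimes>\<^bsub>G\<^esub> g0 \<otimes>\<^bsub>G\<^esub> inv\<^bsub>G\<^esub> h \<otimes>\<^bsub>G\<^esub> a) y"
              using act_mult[OF GS _ aG yX] cG ihG by simp
            finally show ?thesis .
          qed
          also have "inv\<^bsub>G\<^esub> a \<otimes>\<^bsub>G\<^esub> k \<otimes>\<^bsub>G\<^esub> g0 \<otimes>\<^bsub>G\<^esub> inv\<^bsub>G\<^esub> h \<otimes>\<^bsub>G\<^esub> a = \<one>\<^bsub>G\<^esub>"
            using aG kG g0G h_def by (simp add: m_assoc)
          finally have "act (inv\<^bsub>G\<^esub> a \<otimes>\<^bsub>G\<^esub> k \<otimes>\<^bsub>G\<^esub> g0) (act (inv\<^bsub>G\<^esub> h) (act a y)) = y"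
            using act_one[OF GS yX] by simp
          then show "y \<in> FU" unfolding FU_def using pU by (intro image_eqI[where x="(inv\<^bsub>G\<^esub> a \<otimes>\<^bsub>G\<^esub> k \<otimes>\<^bsub>G\<^esub> g0, act (inv\<^bsub>G\<^esub> h) (act a y))"]) simp_all
        qed
        then show ?thesis using VO by blast
      qed
    qed
    have "\<forall>k\<in>K. \<exists>V Q. openin T V \<and> k \<in> V \<and> openin X Q \<and> x \<in> Q \<and>
                   (\<forall>a\<in>V. \<forall>y\<in>Q. act a y \<in> S \<longrightarrow> y \<in> FU)" by (intro ballI claim)
    from bchoice[OF this] obtain V where V: "\<forall>k\<in>K. \<exists>Q. openin T (V k) \<and> k \<in> V k \<and> openin X Q \<and> x \<in> Q \<and>
                   (\<forall>a\<in>V k. \<forall>y\<in>Q. act a y \<in> S \<longrightarrow> y \<in> FU)"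
      by iprover
    from bchoice[OF this] obtain Q where VO: "\<forall>k\<in>K. openin T (V k) \<and> k \<in> V k \<and> openin X (Q k) \<and> x \<in> Q k \<and>
                   (\<forall>a\<in>V k. \<forall>y\<in>Q k. act a y \<in> S \<longrightarrow> y \<in> FU)"
      by iprover
    have cov: "(\<forall>B\<in>V ` K. openin T B) \<and> K \<subseteq> \<Union>(V ` K)" using VO by blast
    have "\<exists>F. finite F \<and> F \<subseteq> V ` K \<and> K \<subseteq> \<Union>F"
      using Kc[unfolded compactin_def, THEN conjunct2, rule_format, OF cov] .
    then obtain F where F: "finite F" "F \<subseteq> V ` K" "K \<subseteq> \<Union>F"
      by (elim exE conjE)
    have "\<exists>C\<subseteq>K. finite C \<and> F = V ` C" using finite_subset_image[OF F(1,2)] .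
    then obtain K0 where K0: "K0 \<subseteq> K" "finite K0" "F = V ` K0"
      by (elim exE conjE)
    define Ox where "Ox = X interior_of N \<inter> \<Inter>(Q ` K0)"
    have "openin X Ox" unfolding Ox_def
      by (rule openin_Int_Inter) (use K0 VO in auto)
    moreover have "x \<in> Ox" unfolding Ox_def using xN K0 VO by auto
    moreover have "Ox \<subseteq> FU"
    proof
      fix y assume yO: "y \<in> Ox"
      have yN: "y \<in> N" using yO interior_of_subset[of X N] unfolding Ox_def by auto
      then have yX: "y \<in> topspace X" using NX by blast
      then obtain g s where gG: "g \<in> carrier G" and sS: "s \<in> S" and yeq: "y = act g s"
        using GSX unfolding set_act_def by blast
      have sX: "s \<in> topspace X" using sS SX by blast
      have igG: "inv\<^bsub>G\<^esub> g \<in> carrier G" using gG by simp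
      have ays: "act (inv\<^bsub>G\<^esub> g) y = s"
        using yeq act_mult[OF GS igG gG sX, symmetric] act_one[OF GS sX] gG by simp
      have "inv\<^bsub>G\<^esub> g \<in> transporter G act N S"
        unfolding transporter_def using igG yN ays sS by blast
      moreover have "transporter G act N S \<subseteq> topspace T"
        unfolding transporter_def topT by blast
      ultimately have "inv\<^bsub>G\<^esub> g \<in> K" unfolding K_def using closure_of_subset[of "transporter G act N S" T] by auto
      then obtain k where kK0: "k \<in> K0" and ik: "inv\<^bsub>G\<^esub> g \<in> V k" using F K0 by blast
      have "y \<in> Q k" using yO kK0 unfolding Ox_def by blast
      moreover have "k \<in> K" using kK0 K0 by auto
      ultimately show "y \<in> FU" using VO ik ays sS by auto
    qed
    ultimately show "\<exists>T. openin X T \<and> x \<in> T \<and> T \<subseteq> ?f ` U" unfolding FU_def by blast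
  qed
qed

lemma orbit_act:
  assumes TG: "topological_group G T" and GS: "G_space G T X act"
    and gG: "g \<in> carrier G" and vX: "v \<in> topspace X"
  shows "orbit G act (act g v) = orbit G act v"
proof -
  interpret group G using tg_facts(1)[OF TG] .
  show ?thesis unfolding orbit_eq
  proof (intro equalityI subsetI)
    fix z assume "z \<in> (\<lambda>g'. act g' (act g v)) ` carrier G"
    then obtain g' where g'G: "g' \<in> carrier G" and z: "z = act g' (act g v)" by blast
    have "z = act (g' \<otimes>\<^bsub>G\<^esub> g) v" using z act_mult[OF GS g'G gG vX] by simp
    moreover have "g' \<otimes>\<^bsub>G\<^esub> g \<in> carrier G" using g'G gG by simp
    ultimately show "z \<in> (\<lambda>g'. act g' v) ` carrier G" by blast
  next
    fix z assume "z \<in> (\<lambda>g'. act g' v) ` carrier G"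
    then obtain g' where g'G: "g' \<in> carrier G" and z: "z = act g' v" by blast
    have c: "g' \<otimes>\<^bsub>G\<^esub> inv\<^bsub>G\<^esub> g \<in> carrier G" using g'G gG by simp
    have "act (g' \<otimes>\<^bsub>G\<^esub> inv\<^bsub>G\<^esub> g) (act g v) = act (g' \<otimes>\<^bsub>G\<^esub> inv\<^bsub>G\<^esub> g \<otimes>\<^bsub>G\<^esub> g) v"
      using act_mult[OF GS c gG vX] by simp
    also have "g' \<otimes>\<^bsub>G\<^esub> inv\<^bsub>G\<^esub> g \<otimes>\<^bsub>G\<^esub> g = g'" using g'G gG by (simp add: m_assoc)
    finally have "z = act (g' \<otimes>\<^bsub>G\<^esub> inv\<^bsub>G\<^esub> g) (act g v)" using z by simp
    then show "z \<in> (\<lambda>g'. act g' (act g v)) ` carrier G" using c by blast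
  qed
qed

lemma istop_orbit:
  "istopology (\<lambda>U. U \<subseteq> orbit G act ` topspace X \<and> openin X {x \<in> topspace X. orbit G act x \<in> U})"
  unfolding istopology_def
proof (rule conjI; intro allI impI)
  fix A B
  assume A: "A \<subseteq> orbit G act ` topspace X \<and> openin X {x \<in> topspace X. orbit G act x \<in> A}"
    and B: "B \<subseteq> orbit G act ` topspace X \<and> openin X {x \<in> topspace X. orbit G act x \<in> B}"
  have "{x \<in> topspace X. orbit G act x \<in> A \<inter> B} =
        {x \<in> topspace X. orbit G act x \<in> A} \<inter> {x \<in> topspace X. orbit G act x \<in> B}" by auto
  then show "A \<inter> B \<subseteq> orbit G act ` topspace X \<and> openin X {x \<in> topspace X. orbit G act x \<in> A \<inter> B}"
    using A B by auto
next
  fix \<K>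
  assume K: "\<forall>K\<in>\<K>. K \<subseteq> orbit G act ` topspace X \<and> openin X {x \<in> topspace X. orbit G act x \<in> K}"
  have "{x \<in> topspace X. orbit G act x \<in> \<Union>\<K>} =
        \<Union>((\<lambda>K. {x \<in> topspace X. orbit G act x \<in> K}) ` \<K>)" by auto
  moreover have "openin X (\<Union>((\<lambda>K. {x \<in> topspace X. orbit G act x \<in> K}) ` \<K>))"
    using K by (intro openin_Union) auto
  ultimately show "\<Union>\<K> \<subseteq> orbit G act ` topspace X \<and> openin X {x \<in> topspace X. orbit G act x \<in> \<Union>\<K>}"
    using K by auto
qed

theorem theorem2p1:
  fixes G :: "('g, 'm) monoid_scheme" and T :: "'g topology"
    and X :: "'x topology" and act :: "'g \<Rightarrow> 'x \<Rightarrow> 'x"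
    and H :: "'g set" and S :: "'x set"
  assumes "topological_group G T" "Hausdorff_space T" "completely_regular_space T"
    and "locally_compact_space T"
    and "Hausdorff_space X" "completely_regular_space X"
    and "G_space G T X act" "proper_G_space G T X act"
    and "subgroup H G" "compactin T H"
    and "global_slice G T X act H S" "small G T X act S"
  shows "open_map (prod_topology T (subtopology X S)) X (\<lambda>(g, s). act g s) \<and>
         open_map (subtopology X S) (orbit_space G X act) (orbit G act)"
proof
  note TG = assms(1) and GS = assms(7) and gsl = assms(11) and sm = assms(12)
  show p1: "open_map (prod_topology T (subtopology X S)) X (\<lambda>(g, s). act g s)"
    unfolding open_map_def using part1[OF TG GS gsl sm] by blast
  show "open_map (subtopology X S) (orbit_space G X act) (orbit G act)"
    unfolding open_map_def
  proof (intro allI impI)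
    fix V assume V: "openin (subtopology X S) V"
    have VX: "V \<subseteq> topspace X" using openin_subset[OF V] by auto
    have topT: "topspace T = carrier G" using tg_facts(2)[OF TG] .
    have "openin (prod_topology T (subtopology X S)) (carrier G \<times> V)"
      using V by (simp add: openin_prod_Times_iff flip: topT)
    then have op: "openin X ((\<lambda>(g, s). act g s) ` (carrier G \<times> V))"
      by (rule part1[OF TG GS gsl sm])
    have eq: "{x \<in> topspace X. orbit G act x \<in> orbit G act ` V} = (\<lambda>(g, s). act g s) ` (carrier G \<times> V)"
    proof (intro equalityI subsetI)
      fix x assume "x \<in> {x \<in> topspace X. orbit G act x \<in> orbit G act ` V}"
      then obtain v where xX: "x \<in> topspace X" and vV: "v \<in> V" and ov: "orbit G act x = orbit G act v"
        by blast
      have "x \<in> orbit G act x"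
        unfolding orbit_eq using act_one[OF GS xX] monoid.one_closed[OF group.is_monoid[OF tg_facts(1)[OF TG]]]
        by (metis image_eqI)
      then obtain g where "g \<in> carrier G" "x = act g v" using ov unfolding orbit_eq by blast
      then show "x \<in> (\<lambda>(g, s). act g s) ` (carrier G \<times> V)" using vV by force
    next
      fix x assume "x \<in> (\<lambda>(g, s). act g s) ` (carrier G \<times> V)"
      then obtain g v where gG: "g \<in> carrier G" and vV: "v \<in> V" and x: "x = act g v" by auto
      have vX: "v \<in> topspace X" using vV VX by blast
      have "x \<in> topspace X" using act_in[OF TG GS gG vX] x by simp
      moreover have "orbit G act x = orbit G act v" using orbit_act[OF TG GS gG vX] x by simp
      ultimately show "x \<in> {x \<in> topspace X. orbit G act x \<in> orbit G act ` V}" using vV by blast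
    qed
    have "orbit G act ` V \<subseteq> orbit G act ` topspace X" using VX by blast
    then show "openin (orbit_space G X act) (orbit G act ` V)"
      unfolding orbit_space_def topology_inverse'[OF istop_orbit] using op eq by simp
  qed
qed

end
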